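(* Let $(\mathcal{A}'_\ell,\mathcal{A}'_r)$ and $(\mathcal{A}''_\ell,\mathcal{A}''_r)$ be pairs of subalgebras of a non-commutative space $(\mathcal{A},\varphi)$ which are bi-monotonically independent (in this order) with respect to $\varphi$. Let $n\ge1$, $\chi:\{1,\dots,n\}\to\{\ell,r\}$, and $a'_j\in\mathcal{A}'_{\chi(j)}$, $a''_j\in\mathcal{A}''_{\chi(j)}$ for $1\le j\le n$. Then \[\varphi\big((a'_1+a''_1)\cdots(a'_n+a''_n)\big)=\sum_{V\subseteq\{1,\dots,n\}}\varphi(a'_V)\prod_{W\in V_\chi}\varphi(a''_W).\]
   Context: Notation. For $\chi:\{1,\dots,n\}\to\{\ell,r\}$ with $\chi^{-1}(\{\ell\})=\{i_1<\dots<i_p\}$ and $\chi^{-1}(\{r\})=\{i_{p+1}>\dots>i_n\}$, $\prec_\chi$ is the total order $i_1\prec_\chi\cdots\prec_\chi i_n$; a $\chi$-interval is an interval for $\prec_\chi$. For $V=\{v_1<\dots<v_s\}$, $a_V=a_{v_1}\cdots a_{v_s}$, and $\varphi$ of the empty product is $1$. For $V=\{v_1\prec_\chi\cdots\prec_\chi v_s\}\subseteq\{1,\dots,n\}$, $V_\chi$ denotes the family of (possibly empty) $\chi$-intervals $V_1,\dots,V_{s+1}$ with $V_1=\{i:i\prec_\chi v_1\}$, $V_{s+1}=\{i:v_s\prec_\chi i\}$, $V_j=\{i:v_{j-1}\prec_\chi i\prec_\chi v_j\}$ for $2\le j\le s$ (for $V=\emptyset$, $V_\chi=\{\{1,\dots,n\}\}$).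 For $\omega:\{1,\dots,n\}\to K$, $\pi_{\chi,\omega}$ is the unique partition of $\{1,\dots,n\}$ into blocks $V_1,\dots,V_m$ that are $\chi$-intervals with $\max_{\prec_\chi}V_k\prec_\chi\min_{\prec_\chi}V_{k+1}$, $\omega$ constant on each block and $\omega(V_k)\ne\omega(V_{k+1})$. A non-commutative space is a complex algebra with a linear functional ($\varphi(1)=1$ if unital). $\sqcup$ denotes free product without identification of units, $*$ free product of unital algebras with identified units, $\widetilde{\mathcal{C}}=\mathbb{C}1\oplus\mathcal{C}$ unitization. c-bi-free product: for pairs of unital algebras $(\mathcal{B}_{k,\ell},\mathcal{B}_{k,r})$ with unital functionals $\varphi_k,\psi_k$ on $\mathcal{B}_{k,\ell}*\mathcal{B}_{k,r}$, it is the unique pair $(\varphi,\psi)$ of unital functionals on $*_k(\mathcal{B}_{k,\ell}*\mathcal{B}_{k,r})$ extending them such that whenever $b_j\in\mathcal{B}_{\omega(j),\chi(j)}$ and $\psi(b_V)=0$ for all $V\in\pi_{\chi,\omega}$, then $\psi(b_1\cdots b_n)=0$ and $\varphi(b_1\cdots b_n)=\prod_{V\in\pi_{\chi,\omega}}\varphi(b_V)$. Bi-monotonic product: for functionals $\varphi_k$ on $\mathcal{A}_{k,\ell}\sqcup\mathcal{A}_{k,r}$ ($k=1,2$), $\varphi_1\rhd\!\!\rhd\varphi_2$ is the restriction to $(\mathcal{A}_{1,\ell}\sqcup\mathcal{A}_{1,r})\sqcup(\mathcal{A}_{2,\ell}\sqcup\mathcal{A}_{2,r})$ of the first functional of the c-bi-free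 product of $(\widetilde{\varphi_1},\delta_1)$ and $(\widetilde{\varphi_2},\widetilde{\varphi_2})$ for pairs $(\widetilde{\mathcal{A}_{k,\ell}},\widetilde{\mathcal{A}_{k,r}})$, where $\widetilde{\varphi_k}$ is the unital extension of $\varphi_k$ and $\delta_1$ is the unital functional vanishing on $\mathcal{A}_{1,\ell}\sqcup\mathcal{A}_{1,r}$. Two pairs of subalgebras of $(\mathcal{A},\varphi)$ are bi-monotonically independent (in the given order) if $\varphi\circ\iota=\varphi_1\rhd\!\!\rhd\varphi_2$, with $\iota$ the homomorphism from the free product induced by inclusions and $\varphi_k=\varphi\circ\iota|_{\mathcal{A}_{k,\ell}\sqcup\mathcal{A}_{k,r}}$. *)

theory Defs
  imports Complex_Main
begin

datatype side = Lft | Rgt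

definition complex_alg :: "(complex \<Rightarrow> 'a::ring \<Rightarrow> 'a) \<Rightarrow> bool" where
  "complex_alg smul \<longleftrightarrow>
     (\<forall>c x y. smul c (x + y) = smul c x + smul c y) \<and>
     (\<forall>c d x. smul (c + d) x = smul c x + smul d x) \<and>
     (\<forall>c d x. smul (c * d) x = smul c (smul d x)) \<and>
     (\<forall>x. smul 1 x = x) \<and>
     (\<forall>c x y. smul c (x * y) = smul c x * y \<and> smul c (x * y) = x * smul c y)"

definition lin_functional :: "(complex \<Rightarrow> 'a::ring \<Rightarrow> 'a) \<Rightarrow> ('a \<Rightarrow> complex) \<Rightarrow> bool" where
  "lin_functional smul \<phi> \<longleftrightarrow>
     (\<forall>x y. \<phi> (x + y) = \<phi> x + \<phi> y) \<and> (\<forall>c x. \<phi> (smul c x) = c * \<phi> x)"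

definition nc_space :: "(complex \<Rightarrow> 'a::ring \<Rightarrow> 'a) \<Rightarrow> ('a \<Rightarrow> complex) \<Rightarrow> bool" where
  "nc_space smul \<phi> \<longleftrightarrow> complex_alg smul \<and> lin_functional smul \<phi> \<and>
     (\<forall>u. (\<forall>x. u * x = x \<and> x * u = x) \<longrightarrow> \<phi> u = 1)"

definition subalgebra :: "(complex \<Rightarrow> 'a::ring \<Rightarrow> 'a) \<Rightarrow> 'a set \<Rightarrow> bool" where
  "subalgebra smul S \<longleftrightarrow> 0 \<in> S \<and> (\<forall>x\<in>S. \<forall>y\<in>S. x + y \<in> S \<and> x * y \<in> S) \<and>
     (\<forall>c. \<forall>x\<in>S. smul c x \<in> S)"

text \<open>Product of a nonempty list (in order); the empty product is never evaluated.\<close>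
fun lprod :: "'a::times list \<Rightarrow> 'a" where
  "lprod [] = undefined"
| "lprod [x] = x"
| "lprod (x # y # xs) = x * lprod (y # xs)"

definition phiprod :: "('a::ring \<Rightarrow> complex) \<Rightarrow> 'a list \<Rightarrow> complex" where
  "phiprod \<phi> xs = (if xs = [] then 1 else \<phi> (lprod xs))"

definition chi_less :: "(nat \<Rightarrow> side) \<Rightarrow> nat \<Rightarrow> nat \<Rightarrow> bool" where
  "chi_less \<chi> i j \<longleftrightarrow>
     (\<chi> i = Lft \<and> \<chi> j = Lft \<and> i < j) \<or> (\<chi> i = Rgt \<and> \<chi> j = Rgt \<and> j < i) \<or>
     (\<chi> i = Lft \<and> \<chi> j = Rgt)"

definition chi_le :: "(nat \<Rightarrow> side) \<Rightarrow> nat \<Rightarrow> nat \<Rightarrow> bool" where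
  "chi_le \<chi> i j \<longleftrightarrow> i = j \<or> chi_less \<chi> i j"

definition chi_sorted :: "(nat \<Rightarrow> side) \<Rightarrow> nat set \<Rightarrow> nat list" where
  "chi_sorted \<chi> V = (THE xs. set xs = V \<and> sorted_wrt (chi_less \<chi>) xs)"

text \<open>The family V_chi = (V_1, ..., V_{s+1}) of chi-intervals of {1..n} cut out by V.\<close>
definition chi_gaps :: "(nat \<Rightarrow> side) \<Rightarrow> nat \<Rightarrow> nat set \<Rightarrow> nat set list" where
  "chi_gaps \<chi> n V = (let vs = chi_sorted \<chi> V; s = length vs in
     map (\<lambda>j. {i \<in> {1..n}. (j = 0 \<or> chi_less \<chi> (vs ! (j - 1)) i) \<and>
                            (j = s \<or> chi_less \<chi> i (vs ! j))}) [0..<s + 1])"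

text \<open>pi_{chi,omega}: the maximal chi-intervals of {1..n} on which omega is constant.\<close>
definition same_block :: "nat \<Rightarrow> (nat \<Rightarrow> side) \<Rightarrow> (nat \<Rightarrow> nat) \<Rightarrow> nat \<Rightarrow> nat \<Rightarrow> bool" where
  "same_block n \<chi> \<omega> i j \<longleftrightarrow>
     (\<forall>k\<in>{1..n}. ((chi_le \<chi> i k \<and> chi_le \<chi> k j) \<or> (chi_le \<chi> j k \<and> chi_le \<chi> k i))
        \<longrightarrow> \<omega> k = \<omega> i)"

definition pi_blocks :: "nat \<Rightarrow> (nat \<Rightarrow> side) \<Rightarrow> (nat \<Rightarrow> nat) \<Rightarrow> nat set set" where
  "pi_blocks n \<chi> \<omega> = {{j \<in> {1..n}. same_block n \<chi> \<omega> i j} | i. i \<in> {1..n}}"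

text \<open>Words in the free product (without identification of units) of the four algebras
  Alg k s (k in {1,2}, s a side): lists of tagged letters.  A linear functional on
  that free product, resp. a unital functional on the unital free product of the
  unitizations, is encoded by its values on words (value 1 on the empty word).\<close>
type_synonym 'a word = "(nat \<times> side \<times> 'a) list"

definition valid_word :: "(nat \<Rightarrow> side \<Rightarrow> 'a set) \<Rightarrow> 'a word \<Rightarrow> bool" where
  "valid_word Alg w \<longleftrightarrow> (\<forall>(k, s, a) \<in> set w. k \<in> {1, 2} \<and> a \<in> Alg k s)"

definition word_functional ::
  "(complex \<Rightarrow> 'a::ring \<Rightarrow> 'a) \<Rightarrow> (nat \<Rightarrow> side \<Rightarrow> 'a set) \<Rightarrow> ('a word \<Rightarrow> complex) \<Rightarrow> bool" where
  "word_functional smul Alg \<Phi> \<longleftrightarrow> \<Phi> [] = 1 \<and>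
     (\<forall>u v k s a b. valid_word Alg u \<and> valid_word Alg v \<and> k \<in> {1, 2} \<and>
        a \<in> Alg k s \<and> b \<in> Alg k s \<longrightarrow>
        \<Phi> (u @ (k, s, a + b) # v) = \<Phi> (u @ (k, s, a) # v) + \<Phi> (u @ (k, s, b) # v) \<and>
        (\<forall>c. \<Phi> (u @ (k, s, smul c a) # v) = c * \<Phi> (u @ (k, s, a) # v)) \<and>
        \<Phi> (u @ (k, s, a) # (k, s, b) # v) = \<Phi> (u @ (k, s, a * b) # v))"

text \<open>Value of the functional on b_V = b_{v_1}...b_{v_s} (natural order), where
  b_j = lam j 1 + a j is an element of the unitization of Alg (omega j) (chi j).\<close>
definition uext ::
  "('a word \<Rightarrow> complex) \<Rightarrow> (nat \<Rightarrow> nat) \<Rightarrow> (nat \<Rightarrow> side) \<Rightarrow> (nat \<Rightarrow> complex) \<Rightarrow> (nat \<Rightarrow> 'a)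
     \<Rightarrow> nat set \<Rightarrow> complex" where
  "uext \<Phi> \<omega> \<chi> lam a V = (\<Sum>S\<in>Pow V. (\<Prod>j\<in>V - S. lam j) *
       \<Phi> (map (\<lambda>j. (\<omega> j, \<chi> j, a j)) (sorted_list_of_set S)))"

definition alg4 :: "'a set \<Rightarrow> 'a set \<Rightarrow> 'a set \<Rightarrow> 'a set \<Rightarrow> nat \<Rightarrow> side \<Rightarrow> 'a set" where
  "alg4 A1l A1r A2l A2r k s =
     (if k = 1 then (if s = Lft then A1l else A1r) else (if s = Lft then A2l else A2r))"

text \<open>(Phi, Psi) is the c-bi-free product of (tilde phi_1, delta_1) and
  (tilde phi_2, tilde phi_2), where phi_k = phi o iota restricted to the k-th pair.\<close>
definition bimono_cbifree ::
  "(complex \<Rightarrow> 'a::ring \<Rightarrow> 'a) \<Rightarrow> ('a \<Rightarrow> complex) \<Rightarrow> (nat \<Rightarrow> side \<Rightarrow> 'a set)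
     \<Rightarrow> ('a word \<Rightarrow> complex) \<Rightarrow> ('a word \<Rightarrow> complex) \<Rightarrow> bool" where
  "bimono_cbifree smul \<phi> Alg \<Phi> \<Psi> \<longleftrightarrow>
     word_functional smul Alg \<Phi> \<and> word_functional smul Alg \<Psi> \<and>
     (\<forall>w. valid_word Alg w \<and> w \<noteq> [] \<and> (\<forall>x\<in>set w. fst x = 1) \<longrightarrow>
        \<Phi> w = \<phi> (lprod (map (snd \<circ> snd) w)) \<and> \<Psi> w = 0) \<and>
     (\<forall>w. valid_word Alg w \<and> w \<noteq> [] \<and> (\<forall>x\<in>set w. fst x = 2) \<longrightarrow>
        \<Phi> w = \<phi> (lprod (map (snd \<circ> snd) w)) \<and> \<Psi> w = \<phi> (lprod (map (snd \<circ> snd) w))) \<and>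
     (\<forall>n \<omega> \<chi> lam a. n \<ge> 1 \<and> (\<forall>j\<in>{1..n}. \<omega> j \<in> {1, 2} \<and> a j \<in> Alg (\<omega> j) (\<chi> j)) \<and>
        (\<forall>V\<in>pi_blocks n \<chi> \<omega>. uext \<Psi> \<omega> \<chi> lam a V = 0) \<longrightarrow>
        uext \<Psi> \<omega> \<chi> lam a {1..n} = 0 \<and>
        uext \<Phi> \<omega> \<chi> lam a {1..n} = (\<Prod>V\<in>pi_blocks n \<chi> \<omega>. uext \<Phi> \<omega> \<chi> lam a V))"

definition bimono_indep ::
  "(complex \<Rightarrow> 'a::ring \<Rightarrow> 'a) \<Rightarrow> ('a \<Rightarrow> complex) \<Rightarrow> 'a set \<Rightarrow> 'a set \<Rightarrow> 'a set \<Rightarrow> 'a set \<Rightarrow> bool" where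
  "bimono_indep smul \<phi> A1l A1r A2l A2r \<longleftrightarrow>
     (\<exists>\<Phi> \<Psi>. bimono_cbifree smul \<phi> (alg4 A1l A1r A2l A2r) \<Phi> \<Psi> \<and>
        (\<forall>w. valid_word (alg4 A1l A1r A2l A2r) w \<and> w \<noteq> [] \<longrightarrow>
           \<phi> (lprod (map (snd \<circ> snd) w)) = \<Phi> w))"

end

theory Submission
  imports Defs
begin
lemma chi_less_irrefl: "\<not> chi_less \<chi> i i"
  by (cases "\<chi> i") (auto simp: chi_less_def)

lemma chi_less_asym: "chi_less \<chi> i j \<Longrightarrow> \<not> chi_less \<chi> j i"
  by (cases "\<chi> i"; cases "\<chi> j") (auto simp: chi_less_def)

lemma chi_less_trans: "chi_less \<chi> i j \<Longrightarrow> chi_less \<chi> j k \<Longrightarrow> chi_less \<chi> i k"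
  by (cases "\<chi> i"; cases "\<chi> j"; cases "\<chi> k") (auto simp: chi_less_def)

lemma chi_less_total: "i \<noteq> j \<Longrightarrow> chi_less \<chi> i j \<or> chi_less \<chi> j i"
  by (cases "\<chi> i"; cases "\<chi> j") (auto simp: chi_less_def)

lemma chi_le_refl: "chi_le \<chi> i i" by (simp add: chi_le_def)

lemma chi_le_antisym: "chi_le \<chi> i j \<Longrightarrow> chi_le \<chi> j i \<Longrightarrow> i = j"
  using chi_less_asym unfolding chi_le_def by blast

lemma chi_le_total: "chi_le \<chi> i j \<or> chi_le \<chi> j i"
  using chi_less_total unfolding chi_le_def by blast

lemma chi_le_less_trans: "chi_le \<chi> i j \<Longrightarrow> chi_less \<chi> j k \<Longrightarrow> chi_less \<chi> i k"
  using chi_less_trans unfolding chi_le_def by blast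

lemma chi_less_le_trans: "chi_less \<chi> i j \<Longrightarrow> chi_le \<chi> j k \<Longrightarrow> chi_less \<chi> i k"
  using chi_less_trans unfolding chi_le_def by blast

lemma chi_less_mono:
  assumes "\<And>i j. i \<in> A \<Longrightarrow> j \<in> A \<Longrightarrow> i < j \<Longrightarrow> e i < e j" "i \<in> A" "j \<in> A"
  shows "chi_less (\<lambda>k. \<chi> (e k)) i j = chi_less \<chi> (e i) (e j)"
proof -
  have "i < j \<longleftrightarrow> e i < e j" using assms
    by (metis less_asym linorder_neqE_nat)
  moreover have "j < i \<longleftrightarrow> e j < e i" using assms
    by (metis less_asym linorder_neqE_nat)
  ultimately show ?thesis unfolding chi_less_def by simp
qed

lemma sorted_wrt_unique:
  assumes "\<And>x y. x \<noteq> y \<Longrightarrow> R x y \<or> R y x" "\<And>x y. R x y \<Longrightarrow> \<not> R y x"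
  shows "sorted_wrt R xs \<Longrightarrow> sorted_wrt R ys \<Longrightarrow> set xs = set ys \<Longrightarrow> xs = ys"
proof (induction xs arbitrary: ys)
  case Nil then show ?case by simp
next
  case (Cons x xs)
  then obtain y ys' where ys: "ys = y # ys'" by (cases ys) auto
  have irr: "\<And>z. \<not> R z z" using assms(2) by blast
  have xy: "x = y"
  proof (rule ccontr)
    assume ne: "x \<noteq> y"
    have "x \<in> set ys'" using Cons.prems ne ys by (metis insert_iff list.simps(15))
    hence "R y x" using Cons.prems(2) ys by simp
    moreover have "y \<in> set xs" using Cons.prems ne ys by (metis insert_iff list.simps(15))
    hence "R x y" using Cons.prems(1) by simp
    ultimately show False using assms(2) by blast
  qed
  have "x \<notin> set xs" using Cons.prems(1) irr by auto
  moreover have "y \<notin> set ys'" using Cons.prems(2) ys irr by auto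
  ultimately have "set xs = set ys'" using Cons.prems(3) ys xy by auto
  then have "xs = ys'" using Cons.IH Cons.prems ys by simp
  then show ?case using xy ys by simp
qed

lemma chi_sorted_exists:
  assumes "finite V"
  shows "\<exists>xs. set xs = V \<and> sorted_wrt (chi_less \<chi>) xs"
proof -
  let ?L = "sorted_list_of_set {v\<in>V. \<chi> v = Lft}"
  let ?R = "rev (sorted_list_of_set {v\<in>V. \<chi> v = Rgt})"
  have "set (?L @ ?R) = V" using assms by (auto intro: side.exhaust)
  moreover have L: "sorted_wrt (chi_less \<chi>) ?L"
    by (rule sorted_wrt_mono_rel[OF _ strict_sorted_list_of_set]) (use assms in \<open>auto simp: chi_less_def\<close>)
  moreover have R: "sorted_wrt (\<lambda>x y. chi_less \<chi> y x) (sorted_list_of_set {v\<in>V. \<chi> v = Rgt})"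
    by (rule sorted_wrt_mono_rel[OF _ strict_sorted_list_of_set]) (use assms in \<open>auto simp: chi_less_def\<close>)
  moreover have "sorted_wrt (chi_less \<chi>) (?L @ ?R)"
    unfolding sorted_wrt_append sorted_wrt_rev
    using assms L R by (auto simp: chi_less_def)
  ultimately show ?thesis by blast
qed

lemma chi_sorted_props:
  assumes "finite V"
  shows "set (chi_sorted \<chi> V) = V \<and> sorted_wrt (chi_less \<chi>) (chi_sorted \<chi> V)"
proof -
  have ex1: "\<exists>!xs. set xs = V \<and> sorted_wrt (chi_less \<chi>) xs"
    using chi_sorted_exists[OF assms] sorted_wrt_unique[of "chi_less \<chi>"]
      chi_less_total chi_less_asym by metis
  show ?thesis unfolding chi_sorted_def by (rule theI'[OF ex1])
qed

definition cnt :: "(nat \<Rightarrow> side) \<Rightarrow> nat set \<Rightarrow> nat \<Rightarrow> nat" where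
  "cnt \<chi> V y = card {v\<in>V. chi_less \<chi> v y}"

lemma sorted_wrt_chi_distinct: "sorted_wrt (chi_less \<chi>) xs \<Longrightarrow> distinct xs"
  by (induction xs) (auto simp: chi_less_irrefl)

lemma gapcond_cnt:
  assumes sw: "sorted_wrt (chi_less \<chi>) vs" and t: "t \<le> length vs"
    and g: "(t = 0 \<or> chi_less \<chi> (vs!(t-1)) y) \<and> (t = length vs \<or> chi_less \<chi> y (vs!t))"
  shows "y \<notin> set vs \<and> cnt \<chi> (set vs) y = t"
proof -
  have lt: "\<And>i j. i < j \<Longrightarrow> j < length vs \<Longrightarrow> chi_less \<chi> (vs!i) (vs!j)"
    using sw sorted_wrt_nth_less by blast
  have before: "chi_less \<chi> (vs!i) y" if "i < t" for i
  proof (cases "i = t - 1")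
    case True then show ?thesis using g that by auto
  next
    case False
    then have "chi_less \<chi> (vs!i) (vs!(t-1))" using lt that t by auto
    moreover have "chi_less \<chi> (vs!(t-1)) y" using g that by auto
    ultimately show ?thesis using chi_less_trans by blast
  qed
  have after: "chi_less \<chi> y (vs!i)" if "t \<le> i" "i < length vs" for i
  proof (cases "i = t")
    case True then show ?thesis using g that by auto
  next
    case False
    then have "chi_less \<chi> (vs!t) (vs!i)" using lt that by auto
    moreover have "chi_less \<chi> y (vs!t)" using g that by auto
    ultimately show ?thesis using chi_less_trans by blast
  qed
  have notin: "y \<notin> set vs"
  proof
    assume "y \<in> set vs"
    then obtain i where i: "i < length vs" "vs!i = y" by (auto simp: in_set_conv_nth)
    show False
    proof (cases "i < t")
      case True then show ?thesis using before[of i] i chi_less_irrefl by metis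
    next
      case False then show ?thesis using after[of i] i chi_less_irrefl by (metis not_less)
    qed
  qed
  have "{v\<in>set vs. chi_less \<chi> v y} = set (take t vs)"
  proof (intro set_eqI iffI)
    fix v assume "v \<in> {v\<in>set vs. chi_less \<chi> v y}"
    then obtain i where i: "i < length vs" "vs!i = v" "chi_less \<chi> v y" by (auto simp: in_set_conv_nth)
    have "i < t"
    proof (rule ccontr)
      assume "\<not> i < t"
      then have "chi_less \<chi> y v" using after[of i] i by simp
      then show False using i(3) chi_less_asym by blast
    qed
    then show "v \<in> set (take t vs)" using i by (auto simp: in_set_conv_nth)
  next
    fix v assume "v \<in> set (take t vs)"
    then obtain i where i: "i < t" "vs!i = v" using t by (auto simp: in_set_conv_nth)
    then show "v \<in> {v\<in>set vs. chi_less \<chi> v y}" using before[of i] t by auto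
  qed
  moreover have "distinct (take t vs)" using sorted_wrt_chi_distinct[OF sw] by simp
  ultimately have "cnt \<chi> (set vs) y = t" unfolding cnt_def using t
    by (metis distinct_card length_take min_absorb2)
  with notin show ?thesis by simp
qed

lemma gap_exists:
  assumes sw: "sorted_wrt (chi_less \<chi>) vs" and y: "y \<notin> set vs"
  shows "\<exists>t\<le>length vs. (t = 0 \<or> chi_less \<chi> (vs!(t-1)) y) \<and> (t = length vs \<or> chi_less \<chi> y (vs!t))"
proof -
  define t where "t = (LEAST i. i = length vs \<or> \<not> chi_less \<chi> (vs!i) y)"
  have t1: "t = length vs \<or> \<not> chi_less \<chi> (vs!t) y"
    unfolding t_def by (rule LeastI[of _ "length vs"]) simp
  have tle: "t \<le> length vs" unfolding t_def by (rule Least_le) simp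
  have t2: "t = 0 \<or> chi_less \<chi> (vs!(t-1)) y"
  proof (cases "t = 0")
    case False
    then have "t - 1 < t" by simp
    then have "\<not> (t - 1 = length vs \<or> \<not> chi_less \<chi> (vs!(t-1)) y)"
      unfolding t_def by (rule not_less_Least)
    then show ?thesis by simp
  qed simp
  have t3: "t = length vs \<or> chi_less \<chi> y (vs!t)"
  proof (cases "t = length vs")
    case False
    then have "t < length vs" using tle by simp
    then have "vs!t \<noteq> y" using y by auto
    then show ?thesis using t1 chi_less_total by blast
  qed simp
  show ?thesis using t2 t3 tle by blast
qed

lemma gap_char:
  assumes sw: "sorted_wrt (chi_less \<chi>) vs" and t: "t \<le> length vs"
  shows "((t = 0 \<or> chi_less \<chi> (vs!(t-1)) y) \<and> (t = length vs \<or> chi_less \<chi> y (vs!t)))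
     \<longleftrightarrow> (y \<notin> set vs \<and> cnt \<chi> (set vs) y = t)"
proof
  assume "(t = 0 \<or> chi_less \<chi> (vs!(t-1)) y) \<and> (t = length vs \<or> chi_less \<chi> y (vs!t))"
  then show "y \<notin> set vs \<and> cnt \<chi> (set vs) y = t" by (rule gapcond_cnt[OF sw t])
next
  assume a: "y \<notin> set vs \<and> cnt \<chi> (set vs) y = t"
  then obtain t' where t': "t' \<le> length vs" "(t' = 0 \<or> chi_less \<chi> (vs!(t'-1)) y) \<and> (t' = length vs \<or> chi_less \<chi> y (vs!t'))"
    using gap_exists[OF sw] by blast
  have "cnt \<chi> (set vs) y = t'" using gapcond_cnt[OF sw t'(1) t'(2)] by simp
  then have "t' = t" using a by simp
  then show "(t = 0 \<or> chi_less \<chi> (vs!(t-1)) y) \<and> (t = length vs \<or> chi_less \<chi> y (vs!t))"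
    using t'(2) by simp
qed

definition G :: "(nat \<Rightarrow> side) \<Rightarrow> nat \<Rightarrow> nat set \<Rightarrow> nat \<Rightarrow> nat set" where
  "G \<chi> n V t = {y\<in>{1..n}. y \<notin> V \<and> cnt \<chi> V y = t}"

lemma chi_gaps_G:
  assumes "finite V"
  shows "chi_gaps \<chi> n V = map (G \<chi> n V) [0..<card V + 1]"
proof -
  let ?vs = "chi_sorted \<chi> V"
  have p: "set ?vs = V" "sorted_wrt (chi_less \<chi>) ?vs" using chi_sorted_props[OF assms] by auto
  have len: "length ?vs = card V"
    using p sorted_wrt_chi_distinct distinct_card by metis
  show ?thesis
    unfolding chi_gaps_def Let_def len
  proof (rule map_cong[OF refl])
    fix t assume "t \<in> set [0..<card V + 1]"
    then have "t \<le> card V" by (simp only: set_upt atLeastLessThan_iff) linarith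
    then have t: "t \<le> length ?vs" by (simp only: len)
    show "{i \<in> {1..n}. (t = 0 \<or> chi_less \<chi> (?vs ! (t - 1)) i) \<and> (t = card V \<or> chi_less \<chi> i (?vs ! t))}
      = G \<chi> n V t"
      unfolding G_def using gap_char[OF p(2) t] p(1) len by auto
  qed
qed

lemma uext_cong: "(\<And>j. j \<in> X \<Longrightarrow> lam j = lam' j) \<Longrightarrow> uext \<Phi> \<omega> \<chi> lam a X = uext \<Phi> \<omega> \<chi> lam' a X"
  unfolding uext_def by (intro sum.cong refl arg_cong2[where f="(*)"] prod.cong) auto

lemma uext_empty: "uext \<Phi> \<omega> \<chi> lam a {} = \<Phi> []"
  unfolding uext_def by simp

lemma uext_zero:
  assumes "finite X" "\<And>j. j \<in> X \<Longrightarrow> lam j = 0"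
  shows "uext \<Phi> \<omega> \<chi> lam a X = \<Phi> (map (\<lambda>j. (\<omega> j, \<chi> j, a j)) (sorted_list_of_set X))"
proof -
  have "uext \<Phi> \<omega> \<chi> lam a X = (\<Prod>j\<in>X - X. lam j) * \<Phi> (map (\<lambda>j. (\<omega> j, \<chi> j, a j)) (sorted_list_of_set X))
     + (\<Sum>S\<in>Pow X - {X}. (\<Prod>j\<in>X - S. lam j) * \<Phi> (map (\<lambda>j. (\<omega> j, \<chi> j, a j)) (sorted_list_of_set S)))"
    unfolding uext_def using assms(1) by (subst sum.remove[of _ X]) auto
  also have "(\<Sum>S\<in>Pow X - {X}. (\<Prod>j\<in>X - S. lam j) * \<Phi> (map (\<lambda>j. (\<omega> j, \<chi> j, a j)) (sorted_list_of_set S))) = 0"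
  proof (rule sum.neutral, intro ballI)
    fix S assume "S \<in> Pow X - {X}"
    then obtain j where "j \<in> X - S" by auto
    then have "(\<Prod>j\<in>X - S. lam j) = 0" using assms by (intro prod_zero) auto
    then show "(\<Prod>j\<in>X - S. lam j) * \<Phi> (map (\<lambda>j. (\<omega> j, \<chi> j, a j)) (sorted_list_of_set S)) = 0" by simp
  qed
  finally show ?thesis by simp
qed

lemma uext_split:
  assumes "finite J" "j0 \<in> J"
  shows "uext \<Phi> \<omega> \<chi> lam a J = lam j0 * uext \<Phi> \<omega> \<chi> lam a (J - {j0}) + uext \<Phi> \<omega> \<chi> (lam(j0 := 0)) a J"
proof -
  let ?J0 = "J - {j0}"
  let ?w = "\<lambda>S. \<Phi> (map (\<lambda>j. (\<omega> j, \<chi> j, a j)) (sorted_list_of_set S))"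
  have J: "J = insert j0 ?J0" using assms by auto
  have fin: "finite ?J0" using assms by simp
  have PJ: "Pow J = Pow ?J0 \<union> insert j0 ` Pow ?J0" by (metis J Pow_insert)
  have disj: "Pow ?J0 \<inter> insert j0 ` Pow ?J0 = {}" by auto
  have inj: "inj_on (insert j0) (Pow ?J0)" unfolding inj_on_def by blast
  have gen: "uext \<Phi> \<omega> \<chi> l a J = (\<Sum>S\<in>Pow ?J0. (\<Prod>j\<in>J - S. l j) * ?w S)
      + (\<Sum>S\<in>Pow ?J0. (\<Prod>j\<in>?J0 - S. l j) * ?w (insert j0 S))" for l
  proof -
    have "uext \<Phi> \<omega> \<chi> l a J = (\<Sum>S\<in>Pow ?J0 \<union> insert j0 ` Pow ?J0. (\<Prod>j\<in>J - S. l j) * ?w S)"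
      unfolding uext_def using PJ by simp
    also have "\<dots> = (\<Sum>S\<in>Pow ?J0. (\<Prod>j\<in>J - S. l j) * ?w S) + (\<Sum>S\<in>insert j0 ` Pow ?J0. (\<Prod>j\<in>J - S. l j) * ?w S)"
      using fin disj by (intro sum.union_disjoint) auto
    also have "(\<Sum>S\<in>insert j0 ` Pow ?J0. (\<Prod>j\<in>J - S. l j) * ?w S) = (\<Sum>S\<in>Pow ?J0. (\<Prod>j\<in>J - insert j0 S. l j) * ?w (insert j0 S))"
      using inj by (simp add: sum.reindex)
    also have "\<dots> = (\<Sum>S\<in>Pow ?J0. (\<Prod>j\<in>?J0 - S. l j) * ?w (insert j0 S))"
    proof (intro sum.cong refl)
      fix S have "J - insert j0 S = ?J0 - S" by blast
      then show "(\<Prod>j\<in>J - insert j0 S. l j) * ?w (insert j0 S) = (\<Prod>j\<in>?J0 - S. l j) * ?w (insert j0 S)" by simp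
    qed
    finally show ?thesis .
  qed
  have p1: "(\<Prod>j\<in>J - S. l j) = l j0 * (\<Prod>j\<in>?J0 - S. l j)" if "S \<in> Pow ?J0" for S l
  proof -
    have "J - S = insert j0 (?J0 - S)" using that assms by auto
    then show ?thesis using fin by simp
  qed
  have p2: "(\<Prod>j\<in>?J0 - S. (lam(j0:=0)) j) = (\<Prod>j\<in>?J0 - S. lam j)" for S
    by (intro prod.cong) auto
  have A1: "(\<Sum>S\<in>Pow ?J0. (\<Prod>j\<in>J - S. lam j) * ?w S) = lam j0 * uext \<Phi> \<omega> \<chi> lam a ?J0"
    unfolding uext_def sum_distrib_left
    by (intro sum.cong refl) (simp add: p1)
  have A2: "(\<Sum>S\<in>Pow ?J0. (\<Prod>j\<in>J - S. (lam(j0:=0)) j) * ?w S) = 0"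
    by (intro sum.neutral ballI) (simp add: p1)
  have B: "(\<Sum>S\<in>Pow ?J0. (\<Prod>j\<in>?J0 - S. (lam(j0:=0)) j) * ?w (insert j0 S))
     = (\<Sum>S\<in>Pow ?J0. (\<Prod>j\<in>?J0 - S. lam j) * ?w (insert j0 S))"
    by (simp only: p2)
  show ?thesis
    unfolding gen[of lam] gen[of "lam(j0:=0)"] A1 A2 B by simp
qed

lemma uext_nonzero:
  assumes "\<Phi> [] = 1" "finite S"
  shows "\<exists>lam. uext \<Phi> \<omega> \<chi> lam a S \<noteq> 0"
  using assms(2)
proof (induction S rule: finite_induct)
  case empty then show ?case using assms(1) by (simp add: uext_empty)
next
  case (insert j0 S)
  then obtain lam where lam: "uext \<Phi> \<omega> \<chi> lam a S \<noteq> 0" by blast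
  let ?U = "uext \<Phi> \<omega> \<chi> lam a S"
  let ?R = "uext \<Phi> \<omega> \<chi> (lam(j0 := 0)) a (insert j0 S)"
  define l where "l = lam(j0 := (1 - ?R) / ?U)"
  have "uext \<Phi> \<omega> \<chi> l a (insert j0 S) = l j0 * uext \<Phi> \<omega> \<chi> l a S + uext \<Phi> \<omega> \<chi> (l(j0 := 0)) a (insert j0 S)"
    using uext_split[of "insert j0 S" j0] insert by simp
  also have "uext \<Phi> \<omega> \<chi> l a S = ?U" using insert by (intro uext_cong) (auto simp: l_def)
  also have "l(j0 := 0) = lam(j0 := 0)" by (simp add: l_def)
  finally have e: "uext \<Phi> \<omega> \<chi> l a (insert j0 S) = l j0 * ?U + ?R" .
  have "l j0 = (1 - ?R) / ?U" by (simp add: l_def)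
  then have "uext \<Phi> \<omega> \<chi> l a (insert j0 S) = 1" using e lam by simp
  then show ?case by (intro exI[of _ l]) simp
qed

lemma uext_root:
  assumes "\<Phi> [] = 1" "finite S" "S \<noteq> {}"
  shows "\<exists>lam. uext \<Phi> \<omega> \<chi> lam a S = 0"
proof -
  obtain j0 where j0: "j0 \<in> S" using assms by auto
  obtain lam where lam: "uext \<Phi> \<omega> \<chi> lam a (S - {j0}) \<noteq> 0" using uext_nonzero[of \<Phi> "S - {j0}" \<omega> \<chi> a] assms by auto
  let ?U = "uext \<Phi> \<omega> \<chi> lam a (S - {j0})"
  let ?R = "uext \<Phi> \<omega> \<chi> (lam(j0 := 0)) a S"
  define l where "l = lam(j0 := - ?R / ?U)"
  have "uext \<Phi> \<omega> \<chi> l a S = l j0 * uext \<Phi> \<omega> \<chi> l a (S - {j0}) + uext \<Phi> \<omega> \<chi> (l(j0 := 0)) a S"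
    using uext_split[of S j0] assms j0 by simp
  also have "uext \<Phi> \<omega> \<chi> l a (S - {j0}) = ?U" by (intro uext_cong) (auto simp: l_def)
  also have "l(j0 := 0) = lam(j0 := 0)" by (simp add: l_def)
  finally have e: "uext \<Phi> \<omega> \<chi> l a S = l j0 * ?U + ?R" .
  have "l j0 = - ?R / ?U" by (simp add: l_def)
  then have "uext \<Phi> \<omega> \<chi> l a S = 0" using e lam by simp
  then show ?thesis by (intro exI[of _ l])
qed

lemma mono_inj_on:
  fixes e :: "nat \<Rightarrow> nat"
  assumes mono: "\<And>i j. i \<in> A \<Longrightarrow> j \<in> A \<Longrightarrow> i < j \<Longrightarrow> e i < e j"
  shows "inj_on e A"
proof (rule inj_onI)
  fix x y assume xy: "x \<in> A" "y \<in> A" "e x = e y"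
  show "x = y"
  proof (rule ccontr)
    assume "x \<noteq> y"
    then consider "x < y" | "y < x" by linarith
    then show False
    proof cases
      case 1 then have "e x < e y" using mono xy by blast
      then show False using xy by simp
    next
      case 2 then have "e y < e x" using mono xy by blast
      then show False using xy by simp
    qed
  qed
qed

lemma sorted_list_of_set_image_mono:
  fixes e :: "nat \<Rightarrow> nat"
  assumes mono: "\<And>i j. i \<in> A \<Longrightarrow> j \<in> A \<Longrightarrow> i < j \<Longrightarrow> e i < e j" and S: "S \<subseteq> A" "finite S"
  shows "sorted_list_of_set (e ` S) = map e (sorted_list_of_set S)"
proof -
  let ?l = "sorted_list_of_set S"
  have sl: "sorted_wrt (<) ?l" "set ?l = S" "length ?l = card S"
    using strict_sorted_list_of_set set_sorted_list_of_set[OF S(2)] length_sorted_list_of_set by auto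
  have "sorted_wrt (<) (map e ?l)"
    unfolding sorted_wrt_map
  proof (rule sorted_wrt_mono_rel[OF _ sl(1)])
    fix x y assume "x \<in> set ?l" "y \<in> set ?l" "x < y"
    then have "x \<in> A" "y \<in> A" using S(1) sl(2) by auto
    then show "e x < e y" using mono \<open>x < y\<close> by simp
  qed
  moreover have "inj_on e S" by (rule inj_on_subset[OF mono_inj_on[OF mono] S(1)])
  then have "card (e ` S) = card S" by (rule card_image)
  ultimately have "sorted_wrt (<) (map e ?l) \<and> set (map e ?l) = e ` S \<and> length (map e ?l) = card (e ` S)"
    using sl by simp
  moreover have "finite (e ` S)" using S(2) by simp
  ultimately show ?thesis by (intro iffD1[OF sorted_list_of_set_unique]) simp_all
qed

lemma uext_reindex:
  fixes e :: "nat \<Rightarrow> nat"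
  assumes mono: "\<And>i j. i \<in> A \<Longrightarrow> j \<in> A \<Longrightarrow> i < j \<Longrightarrow> e i < e j" and X: "X \<subseteq> A" "finite X"
  shows "uext \<Phi> (\<lambda>i. \<omega> (e i)) (\<lambda>i. \<chi> (e i)) (\<lambda>i. lam (e i)) (\<lambda>i. a (e i)) X = uext \<Phi> \<omega> \<chi> lam a (e ` X)"
proof -
  have inj: "inj_on e A" using mono_inj_on[OF mono] .
  then have injX: "inj_on e X" using X inj_on_subset by blast
  have "uext \<Phi> \<omega> \<chi> lam a (e ` X) = (\<Sum>S\<in>image e ` Pow X. (\<Prod>j\<in>e ` X - S. lam j) *
       \<Phi> (map (\<lambda>j. (\<omega> j, \<chi> j, a j)) (sorted_list_of_set S)))"
    unfolding uext_def by (simp add: image_Pow_surj)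
  also have "\<dots> = (\<Sum>S\<in>Pow X. (\<Prod>j\<in>e ` X - e ` S. lam j) *
       \<Phi> (map (\<lambda>j. (\<omega> j, \<chi> j, a j)) (sorted_list_of_set (e ` S))))"
    using inj_on_image_Pow[OF injX] by (subst sum.reindex) auto
  also have "\<dots> = uext \<Phi> (\<lambda>i. \<omega> (e i)) (\<lambda>i. \<chi> (e i)) (\<lambda>i. lam (e i)) (\<lambda>i. a (e i)) X"
    unfolding uext_def
  proof (intro sum.cong refl arg_cong2[where f="(*)"])
    fix S assume S: "S \<in> Pow X"
    have "e ` X - e ` S = e ` (X - S)" using injX S by (auto simp: inj_on_def)
    then show "(\<Prod>j\<in>e ` X - e ` S. lam j) = (\<Prod>j\<in>X - S. lam (e j))"
      using injX by (simp add: prod.reindex inj_on_diff)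
    have "sorted_list_of_set (e ` S) = map e (sorted_list_of_set S)"
      using S X by (intro sorted_list_of_set_image_mono[OF mono, of S]) (auto dest: finite_subset)
    then show "\<Phi> (map (\<lambda>j. (\<omega> j, \<chi> j, a j)) (sorted_list_of_set (e ` S))) =
      \<Phi> (map (\<lambda>j. (\<omega> (e j), \<chi> (e j), a (e j))) (sorted_list_of_set S))" by (simp add: comp_def)
  qed
  finally show ?thesis by simp
qed

lemma chi_le_mono:
  fixes e :: "nat \<Rightarrow> nat"
  assumes mono: "\<And>i j. i \<in> A \<Longrightarrow> j \<in> A \<Longrightarrow> i < j \<Longrightarrow> e i < e j" and ij: "i \<in> A" "j \<in> A"
  shows "chi_le (\<lambda>k. \<chi> (e k)) i j = chi_le \<chi> (e i) (e j)"
proof -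
  have inj: "inj_on e A" using mono by (rule mono_inj_on)
  have "i = j \<longleftrightarrow> e i = e j" using inj ij by (auto simp: inj_on_def)
  then show ?thesis unfolding chi_le_def using chi_less_mono[where A=A and e=e and \<chi>=\<chi>, OF mono ij] by simp
qed

lemma cnt_eq_iff:
  assumes V: "finite V" and x: "x \<notin> V" and y: "y \<notin> V" and le: "chi_le \<chi> x y"
  shows "cnt \<chi> V x = cnt \<chi> V y \<longleftrightarrow> \<not> (\<exists>v\<in>V. chi_less \<chi> x v \<and> chi_less \<chi> v y)"
proof -
  let ?X = "{v\<in>V. chi_less \<chi> v x}" and ?Y = "{v\<in>V. chi_less \<chi> v y}"
  have sub: "?X \<subseteq> ?Y" using le chi_less_le_trans by blast
  have fin: "finite ?Y" using V by simp
  have "cnt \<chi> V x = cnt \<chi> V y \<longleftrightarrow> ?X = ?Y"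
  proof
    assume "cnt \<chi> V x = cnt \<chi> V y"
    then show "?X = ?Y" using card_subset_eq[OF fin sub] unfolding cnt_def by simp
  qed (simp add: cnt_def)
  also have "?X = ?Y \<longleftrightarrow> \<not> (\<exists>v\<in>V. chi_less \<chi> x v \<and> chi_less \<chi> v y)"
  proof
    assume eq: "?X = ?Y"
    show "\<not> (\<exists>v\<in>V. chi_less \<chi> x v \<and> chi_less \<chi> v y)"
    proof
      assume "\<exists>v\<in>V. chi_less \<chi> x v \<and> chi_less \<chi> v y"
      then obtain v where v: "v \<in> V" "chi_less \<chi> x v" "chi_less \<chi> v y" by blast
      then have "v \<in> ?Y" by simp
      then have "v \<in> ?X" using eq by simp
      then show False using v(2) chi_less_asym by blast
    qed
  next
    assume nb: "\<not> (\<exists>v\<in>V. chi_less \<chi> x v \<and> chi_less \<chi> v y)"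
    show "?X = ?Y"
    proof (rule antisym[OF sub], rule subsetI)
      fix v assume v: "v \<in> ?Y"
      have "v \<noteq> x" using v x by auto
      then have "chi_less \<chi> v x \<or> chi_less \<chi> x v" using chi_less_total by blast
      then show "v \<in> ?X" using nb v by auto
    qed
  qed
  finally show ?thesis .
qed

lemma cnt_le: "finite V \<Longrightarrow> cnt \<chi> V y \<le> card V"
  unfolding cnt_def by (rule card_mono) auto

locale core =
  fixes \<Phi> \<Psi> :: "'a::ring word \<Rightarrow> complex" and Alg :: "nat \<Rightarrow> side \<Rightarrow> 'a set"
    and n :: nat and \<chi> :: "nat \<Rightarrow> side" and V :: "nat set" and \<omega> :: "nat \<Rightarrow> nat" and a :: "nat \<Rightarrow> 'a"
  assumes Phi_nil: "\<Phi> [] = 1" and Psi_nil: "\<Psi> [] = 1"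
    and cbf: "\<And>m \<omega>' \<chi>' lam a'. m \<ge> 1 \<Longrightarrow> (\<forall>j\<in>{1..m}. \<omega>' j \<in> {1, 2} \<and> a' j \<in> Alg (\<omega>' j) (\<chi>' j)) \<Longrightarrow>
        (\<forall>X\<in>pi_blocks m \<chi>' \<omega>'. uext \<Psi> \<omega>' \<chi>' lam a' X = 0) \<Longrightarrow>
        uext \<Phi> \<omega>' \<chi>' lam a' {1..m} = (\<Prod>X\<in>pi_blocks m \<chi>' \<omega>'. uext \<Phi> \<omega>' \<chi>' lam a' X)"
    and pure1: "\<And>w. valid_word Alg w \<Longrightarrow> w \<noteq> [] \<Longrightarrow> (\<forall>x\<in>set w. fst x = 1) \<Longrightarrow> \<Psi> w = 0"
    and pure2: "\<And>w. valid_word Alg w \<Longrightarrow> w \<noteq> [] \<Longrightarrow> (\<forall>x\<in>set w. fst x = 2) \<Longrightarrow> \<Phi> w = \<Psi> w"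
    and Vsub: "V \<subseteq> {1..n}"
    and om: "\<omega> = (\<lambda>j. if j \<in> V then 1 else 2)"
    and ain: "\<forall>j\<in>{1..n}. a j \<in> Alg (\<omega> j) (\<chi> j)"
begin

abbreviation wd :: "nat set \<Rightarrow> 'a word" where
  "wd S \<equiv> map (\<lambda>j. (\<omega> j, \<chi> j, a j)) (sorted_list_of_set S)"

abbreviation Gs :: "nat \<Rightarrow> nat set" where "Gs t \<equiv> G \<chi> n V t"

lemma finV: "finite V" using Vsub finite_subset by blast

lemma valid_wd: "S \<subseteq> {1..n} \<Longrightarrow> valid_word Alg (wd S)"
proof -
  assume S: "S \<subseteq> {1..n}"
  then have fS: "finite S" using finite_subset by blast
  show ?thesis unfolding valid_word_def
  proof (intro ballI)
    fix x assume "x \<in> set (wd S)"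
    then obtain j where j: "j \<in> S" "x = (\<omega> j, \<chi> j, a j)" using fS by auto
    then have "j \<in> {1..n}" using S by auto
    then show "case x of (k, s, b) \<Rightarrow> k \<in> {1, 2} \<and> b \<in> Alg k s" using j ain om by auto
  qed
qed

lemma uext_pure2:
  assumes S: "S \<subseteq> {1..n} - V"
  shows "uext \<Phi> \<omega> \<chi> lam a S = uext \<Psi> \<omega> \<chi> lam a S"
  unfolding uext_def
proof (intro sum.cong refl arg_cong2[where f="(*)"])
  fix S' assume S': "S' \<in> Pow S"
  then have fS': "finite S'" using S finite_subset[of S' "{1..n}"] by auto
  show "\<Phi> (wd S') = \<Psi> (wd S')"
  proof (cases "S' = {}")
    case True then show ?thesis using Phi_nil Psi_nil by simp
  next
    case False
    show ?thesis
    proof (rule pure2)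
      show "valid_word Alg (wd S')" using S S' by (intro valid_wd) auto
      show "wd S' \<noteq> []" using False fS' by simp
      show "\<forall>x\<in>set (wd S'). fst x = 2" using S S' fS' om by auto
    qed
  qed
qed

lemma uext_pure1:
  assumes S: "S \<subseteq> V" "S \<noteq> {}" and lam: "\<And>j. j \<in> S \<Longrightarrow> lam j = 0"
  shows "uext \<Psi> \<omega> \<chi> lam a S = 0"
proof -
  have fS: "finite S" using S finV finite_subset by blast
  have "uext \<Psi> \<omega> \<chi> lam a S = \<Psi> (wd S)" by (rule uext_zero[OF fS lam])
  also have "\<dots> = 0"
  proof (rule pure1)
    show "valid_word Alg (wd S)" using S Vsub by (intro valid_wd) auto
    show "wd S \<noteq> []" using S fS by simp
    show "\<forall>x\<in>set (wd S). fst x = 1" using S fS om by auto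
  qed
  finally show ?thesis .
qed

end

definition enum :: "nat set \<Rightarrow> nat \<Rightarrow> nat" where
  "enum J i = sorted_list_of_set J ! (i - 1)"

lemma enum_mono:
  assumes "finite J" "i \<in> {1..card J}" "j \<in> {1..card J}" "i < j"
  shows "enum J i < enum J j"
proof -
  have "sorted_wrt (<) (sorted_list_of_set J)" by (rule strict_sorted_list_of_set)
  moreover have "i - 1 < j - 1" "j - 1 < length (sorted_list_of_set J)" using assms by auto
  ultimately show ?thesis unfolding enum_def using sorted_wrt_nth_less by blast
qed

lemma enum_image:
  assumes "finite J"
  shows "enum J ` {1..card J} = J"
proof (intro set_eqI iffI)
  fix y assume "y \<in> enum J ` {1..card J}"
  then obtain i where i: "i \<in> {1..card J}" "y = enum J i" by blast
  then have "i - 1 < length (sorted_list_of_set J)" by auto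
  then have "y \<in> set (sorted_list_of_set J)" unfolding i(2) enum_def by (rule nth_mem)
  then show "y \<in> J" using assms by simp
next
  fix y assume "y \<in> J"
  then have "y \<in> set (sorted_list_of_set J)" using assms by simp
  then obtain k where k: "k < length (sorted_list_of_set J)" "sorted_list_of_set J ! k = y"
    by (auto simp: in_set_conv_nth)
  then have "Suc k \<in> {1..card J}" "enum J (Suc k) = y" by (auto simp: enum_def)
  then show "y \<in> enum J ` {1..card J}" by (metis imageI)
qed

lemma enum_in: "finite J \<Longrightarrow> i \<in> {1..card J} \<Longrightarrow> enum J i \<in> J"
  using enum_image by blast

lemma same_block_reindex:
  assumes J: "finite J" and ij: "i \<in> {1..card J}" "j \<in> {1..card J}"
  shows "same_block (card J) (\<lambda>k. \<chi> (enum J k)) (\<lambda>k. \<omega> (enum J k)) i j \<longleftrightarrow>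
    (\<forall>k\<in>J. ((chi_le \<chi> (enum J i) k \<and> chi_le \<chi> k (enum J j)) \<or> (chi_le \<chi> (enum J j) k \<and> chi_le \<chi> k (enum J i)))
       \<longrightarrow> \<omega> k = \<omega> (enum J i))"
proof -
  let ?e = "enum J"
  have mono: "\<And>p q. p \<in> {1..card J} \<Longrightarrow> q \<in> {1..card J} \<Longrightarrow> p < q \<Longrightarrow> ?e p < ?e q"
    using enum_mono[OF J] by blast
  have le: "chi_le (\<lambda>k. \<chi> (?e k)) p q = chi_le \<chi> (?e p) (?e q)" if "p \<in> {1..card J}" "q \<in> {1..card J}" for p q
    using chi_le_mono[where A="{1..card J}" and e="?e" and \<chi>=\<chi>, OF mono that] .
  let ?P = "\<lambda>k. ((chi_le \<chi> (?e i) k \<and> chi_le \<chi> k (?e j)) \<or> (chi_le \<chi> (?e j) k \<and> chi_le \<chi> k (?e i)))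
       \<longrightarrow> \<omega> k = \<omega> (?e i)"
  have "same_block (card J) (\<lambda>k. \<chi> (?e k)) (\<lambda>k. \<omega> (?e k)) i j \<longleftrightarrow> (\<forall>k\<in>{1..card J}. ?P (?e k))"
    unfolding same_block_def using le ij by (intro ball_cong refl) simp
  also have "\<dots> \<longleftrightarrow> (\<forall>k\<in>?e ` {1..card J}. ?P k)" by simp
  also have "\<dots> \<longleftrightarrow> (\<forall>k\<in>J. ?P k)" using enum_image[OF J] by simp
  finally show ?thesis .
qed

context core begin

lemma omega_eq_iff: "x \<notin> V \<Longrightarrow> \<omega> k = \<omega> x \<longleftrightarrow> k \<notin> V"
  using om by simp

lemma cond_iff:
  assumes J: "V \<subseteq> J" and x: "x \<notin> V" and y: "y \<in> J"
  shows "(\<forall>k\<in>J. ((chi_le \<chi> x k \<and> chi_le \<chi> k y) \<or> (chi_le \<chi> y k \<and> chi_le \<chi> k x)) \<longrightarrow> \<omega> k = \<omega> x)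
    \<longleftrightarrow> (y \<notin> V \<and> cnt \<chi> V y = cnt \<chi> V x)"
proof
  assume c: "\<forall>k\<in>J. ((chi_le \<chi> x k \<and> chi_le \<chi> k y) \<or> (chi_le \<chi> y k \<and> chi_le \<chi> k x)) \<longrightarrow> \<omega> k = \<omega> x"
  have "(chi_le \<chi> x y \<and> chi_le \<chi> y y) \<or> (chi_le \<chi> y y \<and> chi_le \<chi> y x)"
    using chi_le_total chi_le_refl by blast
  then have yV: "y \<notin> V" using c y omega_eq_iff[OF x] by blast
  have nb: "\<not> (\<exists>v\<in>V. chi_less \<chi> p v \<and> chi_less \<chi> v q)" if "p = x \<and> q = y \<or> p = y \<and> q = x" for p q
  proof
    assume "\<exists>v\<in>V. chi_less \<chi> p v \<and> chi_less \<chi> v q"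
    then obtain v where v: "v \<in> V" "chi_less \<chi> p v" "chi_less \<chi> v q" by blast
    then have "(chi_le \<chi> x v \<and> chi_le \<chi> v y) \<or> (chi_le \<chi> y v \<and> chi_le \<chi> v x)"
      using that unfolding chi_le_def by blast
    then have "\<omega> v = \<omega> x" using c v J by blast
    then show False using v omega_eq_iff[OF x] by simp
  qed
  have "cnt \<chi> V y = cnt \<chi> V x"
  proof (cases "chi_le \<chi> x y")
    case True then show ?thesis using cnt_eq_iff[OF finV x yV True] nb[of x y] by simp
  next
    case False
    then have "chi_le \<chi> y x" using chi_le_total by blast
    then show ?thesis using cnt_eq_iff[OF finV yV x] nb[of y x] by simp
  qed
  with yV show "y \<notin> V \<and> cnt \<chi> V y = cnt \<chi> V x" by simp
next
  assume r: "y \<notin> V \<and> cnt \<chi> V y = cnt \<chi> V x"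
  show "\<forall>k\<in>J. ((chi_le \<chi> x k \<and> chi_le \<chi> k y) \<or> (chi_le \<chi> y k \<and> chi_le \<chi> k x)) \<longrightarrow> \<omega> k = \<omega> x"
  proof (intro ballI impI)
    fix k assume k: "k \<in> J" and btw: "(chi_le \<chi> x k \<and> chi_le \<chi> k y) \<or> (chi_le \<chi> y k \<and> chi_le \<chi> k x)"
    show "\<omega> k = \<omega> x"
    proof (rule ccontr)
      assume "\<omega> k \<noteq> \<omega> x"
      then have kV: "k \<in> V" using omega_eq_iff[OF x] by simp
      then have "k \<noteq> x" "k \<noteq> y" using x r by auto
      then have sb: "(chi_less \<chi> x k \<and> chi_less \<chi> k y) \<or> (chi_less \<chi> y k \<and> chi_less \<chi> k x)"
        using btw unfolding chi_le_def by auto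
      then show False
      proof
        assume a: "chi_less \<chi> x k \<and> chi_less \<chi> k y"
        then have le: "chi_le \<chi> x y" unfolding chi_le_def using chi_less_trans by blast
        have "\<not> (\<exists>v\<in>V. chi_less \<chi> x v \<and> chi_less \<chi> v y)"
          using cnt_eq_iff[OF finV x conjunct1[OF r] le] r by simp
        then show False using a kV by blast
      next
        assume a: "chi_less \<chi> y k \<and> chi_less \<chi> k x"
        then have le: "chi_le \<chi> y x" unfolding chi_le_def using chi_less_trans by blast
        have "\<not> (\<exists>v\<in>V. chi_less \<chi> y v \<and> chi_less \<chi> v x)"
          using cnt_eq_iff[OF finV conjunct1[OF r] x le] r by simp
        then show False using a kV by blast
      qed
    qed
  qed
qed

lemma block_img:
  assumes J: "V \<subseteq> J" "J \<subseteq> {1..n}" and i: "i \<in> {1..card J}" and x: "enum J i \<notin> V"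
  shows "enum J ` {j\<in>{1..card J}. same_block (card J) (\<lambda>k. \<chi> (enum J k)) (\<lambda>k. \<omega> (enum J k)) i j}
     = Gs (cnt \<chi> V (enum J i)) \<inter> J"
proof -
  have fJ: "finite J" using J finite_subset by blast
  let ?e = "enum J"
  have "?e ` {j\<in>{1..card J}. same_block (card J) (\<lambda>k. \<chi> (?e k)) (\<lambda>k. \<omega> (?e k)) i j}
      = {y\<in>J. y \<notin> V \<and> cnt \<chi> V y = cnt \<chi> V (?e i)}"
  proof (intro set_eqI iffI)
    fix y assume "y \<in> ?e ` {j\<in>{1..card J}. same_block (card J) (\<lambda>k. \<chi> (?e k)) (\<lambda>k. \<omega> (?e k)) i j}"
    then obtain j where j: "j \<in> {1..card J}" "same_block (card J) (\<lambda>k. \<chi> (?e k)) (\<lambda>k. \<omega> (?e k)) i j" "y = ?e j"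
      by blast
    have yJ: "y \<in> J" using enum_in[OF fJ j(1)] j(3) by simp
    show "y \<in> {y\<in>J. y \<notin> V \<and> cnt \<chi> V y = cnt \<chi> V (?e i)}"
      using j(2) unfolding same_block_reindex[OF fJ i j(1)] j(3)[symmetric]
      using cond_iff[OF J(1) x yJ] yJ by simp
  next
    fix y assume y: "y \<in> {y\<in>J. y \<notin> V \<and> cnt \<chi> V y = cnt \<chi> V (?e i)}"
    then obtain j where j: "j \<in> {1..card J}" "y = ?e j" using enum_image[OF fJ] by blast
    have yJ: "y \<in> J" using y by simp
    have "same_block (card J) (\<lambda>k. \<chi> (?e k)) (\<lambda>k. \<omega> (?e k)) i j"
      unfolding same_block_reindex[OF fJ i j(1)] j(2)[symmetric]
      using cond_iff[OF J(1) x yJ] y by simp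
    then show "y \<in> ?e ` {j\<in>{1..card J}. same_block (card J) (\<lambda>k. \<chi> (?e k)) (\<lambda>k. \<omega> (?e k)) i j}"
      using j by blast
  qed
  also have "\<dots> = Gs (cnt \<chi> V (?e i)) \<inter> J" unfolding G_def using J by auto
  finally show ?thesis .
qed

lemma block_V:
  assumes J: "finite J" and i: "i \<in> {1..card J}" and x: "enum J i \<in> V"
    and j: "j \<in> {j\<in>{1..card J}. same_block (card J) (\<lambda>k. \<chi> (enum J k)) (\<lambda>k. \<omega> (enum J k)) i j}"
  shows "enum J j \<in> V"
proof -
  let ?c = "\<lambda>k. \<chi> (enum J k)"
  have "(chi_le ?c i j \<and> chi_le ?c j j) \<or> (chi_le ?c j j \<and> chi_le ?c j i)"
    using chi_le_total chi_le_refl by blast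
  then have "\<omega> (enum J j) = \<omega> (enum J i)" using j unfolding same_block_def by blast
  then show ?thesis using x om by (auto split: if_splits)
qed

end

context core begin

lemma Gs_sub: "Gs t \<subseteq> {1..n} - V" unfolding G_def by auto

lemma same_block_refl: "same_block m \<chi>' \<omega>' i i"
  unfolding same_block_def using chi_le_antisym by blast

lemma cbf_zero:
  assumes J: "V \<subseteq> J" "J \<subseteq> {1..n}" and j0: "j0 \<in> J" "j0 \<notin> V"
    and lamV: "\<And>j. j \<in> V \<Longrightarrow> lam j = 0"
    and lamG: "\<And>t. Gs t \<inter> J \<noteq> {} \<Longrightarrow> uext \<Psi> \<omega> \<chi> lam a (Gs t \<inter> J) = 0"
  shows "uext \<Phi> \<omega> \<chi> lam a J = 0"
proof -
  have fJ: "finite J" using J finite_subset by blast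
  define m where "m = card J"
  define e where "e = enum J"
  have mono: "\<And>p q. p \<in> {1..m} \<Longrightarrow> q \<in> {1..m} \<Longrightarrow> p < q \<Longrightarrow> e p < e q"
    unfolding e_def m_def using enum_mono[OF fJ] by blast
  have img: "e ` {1..m} = J" unfolding e_def m_def by (rule enum_image[OF fJ])
  have ein: "\<And>i. i \<in> {1..m} \<Longrightarrow> e i \<in> J" using img by blast
  have m1: "m \<ge> 1" unfolding m_def using fJ j0 card_gt_0_iff[of J] by auto
  define blk where "blk i = {j\<in>{1..m}. same_block m (\<lambda>k. \<chi> (e k)) (\<lambda>k. \<omega> (e k)) i j}" for i
  have pb: "pi_blocks m (\<lambda>k. \<chi> (e k)) (\<lambda>k. \<omega> (e k)) = blk ` {1..m}"
    unfolding pi_blocks_def blk_def by blast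
  have blk_sub: "blk i \<subseteq> {1..m}" for i unfolding blk_def by blast
  have re: "uext \<Theta> (\<lambda>k. \<omega> (e k)) (\<lambda>k. \<chi> (e k)) (\<lambda>k. lam (e k)) (\<lambda>k. a (e k)) X = uext \<Theta> \<omega> \<chi> lam a (e ` X)"
    if "X \<subseteq> {1..m}" for X \<Theta>
    using uext_reindex[where A="{1..m}" and e=e, OF mono that] that finite_subset by blast
  have blkG: "e ` blk i = Gs (cnt \<chi> V (e i)) \<inter> J" if "i \<in> {1..m}" "e i \<notin> V" for i
    using block_img[OF J, of i] that unfolding blk_def e_def m_def by simp
  have hyp: "\<forall>X\<in>pi_blocks m (\<lambda>k. \<chi> (e k)) (\<lambda>k. \<omega> (e k)).
      uext \<Psi> (\<lambda>k. \<omega> (e k)) (\<lambda>k. \<chi> (e k)) (\<lambda>k. lam (e k)) (\<lambda>k. a (e k)) X = 0"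
  proof
    fix X assume "X \<in> pi_blocks m (\<lambda>k. \<chi> (e k)) (\<lambda>k. \<omega> (e k))"
    then obtain i where i: "i \<in> {1..m}" "X = blk i" using pb by blast
    have iX: "i \<in> X" using i same_block_refl unfolding blk_def by blast
    have "uext \<Psi> (\<lambda>k. \<omega> (e k)) (\<lambda>k. \<chi> (e k)) (\<lambda>k. lam (e k)) (\<lambda>k. a (e k)) X = uext \<Psi> \<omega> \<chi> lam a (e ` X)"
      using re blk_sub i by blast
    also have "\<dots> = 0"
    proof (cases "e i \<in> V")
      case True
      have "e ` X \<subseteq> V"
        using block_V[OF fJ, of i] i True unfolding blk_def e_def m_def by blast
      moreover have "e ` X \<noteq> {}" using iX by blast
      ultimately show ?thesis using lamV by (intro uext_pure1) auto
    next
      case False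
      then have "e ` X = Gs (cnt \<chi> V (e i)) \<inter> J" using blkG i by simp
      moreover have "e ` X \<noteq> {}" using iX by blast
      ultimately show ?thesis using lamG by simp
    qed
    finally show "uext \<Psi> (\<lambda>k. \<omega> (e k)) (\<lambda>k. \<chi> (e k)) (\<lambda>k. lam (e k)) (\<lambda>k. a (e k)) X = 0" .
  qed
  have ok: "\<forall>j\<in>{1..m}. \<omega> (e j) \<in> {1, 2} \<and> a (e j) \<in> Alg (\<omega> (e j)) (\<chi> (e j))"
  proof
    fix j assume j: "j \<in> {1..m}"
    have "e j \<in> {1..n}" using ein[OF j] J by auto
    then have "a (e j) \<in> Alg (\<omega> (e j)) (\<chi> (e j))" using ain by blast
    moreover have "\<omega> (e j) \<in> {1, 2}" using om by simp
    ultimately show "\<omega> (e j) \<in> {1, 2} \<and> a (e j) \<in> Alg (\<omega> (e j)) (\<chi> (e j))" by simp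
  qed
  have eq: "uext \<Phi> (\<lambda>k. \<omega> (e k)) (\<lambda>k. \<chi> (e k)) (\<lambda>k. lam (e k)) (\<lambda>k. a (e k)) {1..m} =
      (\<Prod>X\<in>pi_blocks m (\<lambda>k. \<chi> (e k)) (\<lambda>k. \<omega> (e k)).
         uext \<Phi> (\<lambda>k. \<omega> (e k)) (\<lambda>k. \<chi> (e k)) (\<lambda>k. lam (e k)) (\<lambda>k. a (e k)) X)"
    by (rule cbf[OF m1 ok hyp])
  have lhs: "uext \<Phi> (\<lambda>k. \<omega> (e k)) (\<lambda>k. \<chi> (e k)) (\<lambda>k. lam (e k)) (\<lambda>k. a (e k)) {1..m} = uext \<Phi> \<omega> \<chi> lam a J"
    using re[of "{1..m}"] img by simp
  obtain i0 where i0: "i0 \<in> {1..m}" "e i0 = j0" using img j0 by blast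
  have "(\<Prod>X\<in>pi_blocks m (\<lambda>k. \<chi> (e k)) (\<lambda>k. \<omega> (e k)).
         uext \<Phi> (\<lambda>k. \<omega> (e k)) (\<lambda>k. \<chi> (e k)) (\<lambda>k. lam (e k)) (\<lambda>k. a (e k)) X) = 0"
  proof (rule prod_zero)
    show "finite (pi_blocks m (\<lambda>k. \<chi> (e k)) (\<lambda>k. \<omega> (e k)))" unfolding pb by simp
    show "\<exists>X\<in>pi_blocks m (\<lambda>k. \<chi> (e k)) (\<lambda>k. \<omega> (e k)).
         uext \<Phi> (\<lambda>k. \<omega> (e k)) (\<lambda>k. \<chi> (e k)) (\<lambda>k. lam (e k)) (\<lambda>k. a (e k)) X = 0"
    proof (intro bexI)
      let ?T = "Gs (cnt \<chi> V j0) \<inter> J"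
      have G0: "e ` blk i0 = ?T" using blkG i0 j0 by simp
      have "j0 \<in> {1..n}" using j0 J by auto
      then have "j0 \<in> ?T" using j0 unfolding G_def by simp
      then have ne: "?T \<noteq> {}" by blast
      have "uext \<Phi> (\<lambda>k. \<omega> (e k)) (\<lambda>k. \<chi> (e k)) (\<lambda>k. lam (e k)) (\<lambda>k. a (e k)) (blk i0)
          = uext \<Phi> \<omega> \<chi> lam a ?T" using re[OF blk_sub] G0 by simp
      also have "\<dots> = uext \<Psi> \<omega> \<chi> lam a ?T" using Gs_sub by (intro uext_pure2) blast
      also have "\<dots> = 0" using lamG ne by simp
      finally show "uext \<Phi> (\<lambda>k. \<omega> (e k)) (\<lambda>k. \<chi> (e k)) (\<lambda>k. lam (e k)) (\<lambda>k. a (e k)) (blk i0) = 0" .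
      show "blk i0 \<in> pi_blocks m (\<lambda>k. \<chi> (e k)) (\<lambda>k. \<omega> (e k))" using pb i0 by blast
    qed
  qed
  then show ?thesis using eq lhs by simp
qed

lemma lam_star:
  assumes J: "J \<subseteq> {1..n}"
  shows "\<exists>lam. (\<forall>j\<in>V. lam j = 0) \<and> (\<forall>t. Gs t \<inter> J \<noteq> {} \<longrightarrow> uext \<Psi> \<omega> \<chi> lam a (Gs t \<inter> J) = 0)"
proof -
  define L where "L t = (SOME l. uext \<Psi> \<omega> \<chi> l a (Gs t \<inter> J) = 0)" for t
  define lam where "lam y = (if y \<in> J \<and> y \<notin> V then L (cnt \<chi> V y) y else 0)" for y
  have "uext \<Psi> \<omega> \<chi> lam a (Gs t \<inter> J) = 0" if ne: "Gs t \<inter> J \<noteq> {}" for t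
  proof -
    have fin: "finite (Gs t \<inter> J)" using J finite_subset by blast
    have ex: "\<exists>l. uext \<Psi> \<omega> \<chi> l a (Gs t \<inter> J) = 0" by (rule uext_root[of \<Psi> "Gs t \<inter> J" \<omega> \<chi> a, OF Psi_nil fin ne])
    have "uext \<Psi> \<omega> \<chi> lam a (Gs t \<inter> J) = uext \<Psi> \<omega> \<chi> (L t) a (Gs t \<inter> J)"
      by (intro uext_cong) (auto simp: lam_def G_def)
    also have "\<dots> = 0" unfolding L_def by (rule someI_ex[OF ex])
    finally show ?thesis .
  qed
  moreover have "\<forall>j\<in>V. lam j = 0" by (simp add: lam_def)
  ultimately show ?thesis by blast
qed

end

lemma alg_id: "(x::complex) * (c * (a * p)) + u - c * ((x * a + r) * p) = u - c * (r * p)"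
  by (simp add: algebra_simps)

context core begin

lemma core_main:
  assumes fJ: "finite J"
  shows "V \<subseteq> J \<Longrightarrow> J \<subseteq> {1..n} \<Longrightarrow> (\<forall>j\<in>V. lam j = 0) \<Longrightarrow>
    uext \<Phi> \<omega> \<chi> lam a J = \<Phi> (wd V) * (\<Prod>t\<in>{0..card V}. uext \<Phi> \<omega> \<chi> lam a (Gs t \<inter> J))"
  using fJ
proof (induction J arbitrary: lam rule: finite_psubset_induct)
  case (psubset J)
  define RHS where "RHS K l = \<Phi> (wd V) * (\<Prod>t\<in>{0..card V}. uext \<Phi> \<omega> \<chi> l a (Gs t \<inter> K))" for K l
  define D where "D l = uext \<Phi> \<omega> \<chi> l a J - RHS J l" for l
  have VJ: "V \<subseteq> J" and Jn: "J \<subseteq> {1..n}" using psubset.prems by auto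
  show ?case
  proof (cases "J \<subseteq> V")
    case True
    then have JV: "J = V" using VJ by auto
    have "uext \<Phi> \<omega> \<chi> lam a J = \<Phi> (wd V)"
      using JV psubset.prems(3) psubset.hyps(1) by (subst uext_zero) auto
    moreover have "uext \<Phi> \<omega> \<chi> lam a (Gs t \<inter> J) = 1" for t
    proof -
      have "Gs t \<inter> J = {}" using JV Gs_sub by blast
      then show ?thesis using Phi_nil by (simp add: uext_empty)
    qed
    ultimately show ?thesis by simp
  next
    case False
    then obtain j0 where j0: "j0 \<in> J" "j0 \<notin> V" by blast
    have T: "finite {0..card V}" by simp
    have step: "D l = D (l(j := 0))" if l: "\<forall>j\<in>V. l j = 0" and j: "j \<in> J" "j \<notin> V" for l j
    proof -
      let ?l' = "l(j := 0)"
      let ?t0 = "cnt \<chi> V j"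
      let ?T = "{0..card V}"
      have t0: "?t0 \<in> ?T" using cnt_le[OF finV] by simp
      have jn: "j \<in> {1..n}" using j Jn by auto
      have IH: "uext \<Phi> \<omega> \<chi> l a (J - {j}) = RHS (J - {j}) l"
        unfolding RHS_def using j VJ Jn l by (intro psubset.IH) auto
      have split: "uext \<Phi> \<omega> \<chi> l a J = l j * uext \<Phi> \<omega> \<chi> l a (J - {j}) + uext \<Phi> \<omega> \<chi> ?l' a J"
        by (rule uext_split[OF psubset.hyps(1) j(1)])
      have jG: "j \<in> Gs ?t0 \<inter> J" using j jn unfolding G_def by simp
      have finG: "finite (Gs ?t0 \<inter> J)" using psubset.hyps(1) by simp
      have eqG: "Gs ?t0 \<inter> J - {j} = Gs ?t0 \<inter> (J - {j})" by blast
      have f0: "uext \<Phi> \<omega> \<chi> l a (Gs ?t0 \<inter> J) = l j * uext \<Phi> \<omega> \<chi> l a (Gs ?t0 \<inter> (J - {j})) + uext \<Phi> \<omega> \<chi> ?l' a (Gs ?t0 \<inter> J)"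
        using uext_split[OF finG jG] eqG by simp
      have nG: "j \<notin> Gs t" if "t \<noteq> ?t0" for t using that unfolding G_def by auto
      let ?P = "\<Prod>t\<in>?T - {?t0}. uext \<Phi> \<omega> \<chi> l a (Gs t \<inter> J)"
      have P1: "(\<Prod>t\<in>?T - {?t0}. uext \<Phi> \<omega> \<chi> l a (Gs t \<inter> (J - {j}))) = ?P"
      proof (intro prod.cong refl)
        fix t assume "t \<in> ?T - {?t0}"
        then have "Gs t \<inter> (J - {j}) = Gs t \<inter> J" using nG by blast
        then show "uext \<Phi> \<omega> \<chi> l a (Gs t \<inter> (J - {j})) = uext \<Phi> \<omega> \<chi> l a (Gs t \<inter> J)" by simp
      qed
      have P2: "(\<Prod>t\<in>?T - {?t0}. uext \<Phi> \<omega> \<chi> ?l' a (Gs t \<inter> J)) = ?P"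
      proof (intro prod.cong refl)
        fix t assume "t \<in> ?T - {?t0}"
        then have "j \<notin> Gs t \<inter> J" using nG by blast
        then show "uext \<Phi> \<omega> \<chi> ?l' a (Gs t \<inter> J) = uext \<Phi> \<omega> \<chi> l a (Gs t \<inter> J)"
          by (intro uext_cong) auto
      qed
      have R1: "RHS J l = \<Phi> (wd V) * (uext \<Phi> \<omega> \<chi> l a (Gs ?t0 \<inter> J) * ?P)"
        unfolding RHS_def by (subst prod.remove[OF T t0]) simp
      have R2: "RHS (J - {j}) l = \<Phi> (wd V) * (uext \<Phi> \<omega> \<chi> l a (Gs ?t0 \<inter> (J - {j})) * ?P)"
        unfolding RHS_def by (subst prod.remove[OF T t0]) (simp add: P1)
      have R3: "RHS J ?l' = \<Phi> (wd V) * (uext \<Phi> \<omega> \<chi> ?l' a (Gs ?t0 \<inter> J) * ?P)"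
        unfolding RHS_def by (subst prod.remove[OF T t0]) (simp add: P2)
      show ?thesis
        unfolding D_def split R1 R3 f0 IH[unfolded R2] by (rule alg_id)
    qed
    have zeroK: "finite K \<Longrightarrow> K \<subseteq> J - V \<Longrightarrow> \<forall>l::nat\<Rightarrow>complex. (\<forall>j\<in>V. l j = 0) \<longrightarrow> D l = D (\<lambda>y. if y \<in> K then 0 else l y)" for K
    proof (induction K rule: finite_induct)
      case empty then show ?case by simp
    next
      case (insert k K)
      show ?case
      proof (intro allI impI)
        fix l :: "nat \<Rightarrow> complex" assume l: "\<forall>j\<in>V. l j = 0"
        let ?lK = "\<lambda>y. if y \<in> K then 0 else l y"
        have KJ: "K \<subseteq> J - V" using insert.prems by blast
        have k: "k \<in> J" "k \<notin> V" using insert.prems by auto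
        have "D l = D ?lK" using insert.IH[OF KJ] l by blast
        also have "\<dots> = D (?lK(k := 0))"
        proof (rule step)
          show "\<forall>j\<in>V. ?lK j = 0" using l by simp
        qed (use k in simp_all)
        also have "?lK(k := 0) = (\<lambda>y. if y \<in> insert k K then 0 else l y)" by auto
        finally show "D l = D (\<lambda>y. if y \<in> insert k K then 0 else l y)" .
      qed
    qed
    have Dcong: "D l = D l'" if "\<And>j. j \<in> J \<Longrightarrow> l j = l' j" for l l'
    proof -
      have "uext \<Phi> \<omega> \<chi> l a J = uext \<Phi> \<omega> \<chi> l' a J" using that by (rule uext_cong)
      moreover have "uext \<Phi> \<omega> \<chi> l a (Gs t \<inter> J) = uext \<Phi> \<omega> \<chi> l' a (Gs t \<inter> J)" for t
        using that by (intro uext_cong) auto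
      ultimately show ?thesis unfolding D_def RHS_def by simp
    qed
    have Dconst: "D l = D (\<lambda>_. 0)" if l: "\<forall>j\<in>V. l j = 0" for l :: "nat \<Rightarrow> complex"
    proof -
      have "D l = D (\<lambda>y. if y \<in> J - V then 0 else l y)"
        using zeroK[OF finite_Diff[OF psubset.hyps(1)] subset_refl] l by blast
      also have "\<dots> = D (\<lambda>_. 0)" using l by (intro Dcong) auto
      finally show ?thesis .
    qed
    obtain ls where ls: "\<forall>j\<in>V. ls j = 0" "\<forall>t. Gs t \<inter> J \<noteq> {} \<longrightarrow> uext \<Psi> \<omega> \<chi> ls a (Gs t \<inter> J) = 0"
      using lam_star[OF Jn] by blast
    have L0: "uext \<Phi> \<omega> \<chi> ls a J = 0"
      using ls by (intro cbf_zero[OF VJ Jn j0]) auto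
    have R0: "RHS J ls = 0"
    proof -
      let ?t0 = "cnt \<chi> V j0"
      have "j0 \<in> {1..n}" using j0 Jn by auto
      then have jG: "j0 \<in> Gs ?t0 \<inter> J" using j0 unfolding G_def by simp
      have "uext \<Phi> \<omega> \<chi> ls a (Gs ?t0 \<inter> J) = uext \<Psi> \<omega> \<chi> ls a (Gs ?t0 \<inter> J)"
        using Gs_sub by (intro uext_pure2) blast
      also have "\<dots> = 0" using ls jG by blast
      finally have z: "uext \<Phi> \<omega> \<chi> ls a (Gs ?t0 \<inter> J) = 0" .
      have "(\<Prod>t\<in>{0..card V}. uext \<Phi> \<omega> \<chi> ls a (Gs t \<inter> J)) = 0"
        using z cnt_le[OF finV, of \<chi> j0] by (intro prod_zero) auto
      then show ?thesis unfolding RHS_def by simp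
    qed
    have "D lam = D ls" using Dconst[of lam] Dconst[of ls] psubset.prems(3) ls(1) by simp
    also have "\<dots> = 0" unfolding D_def using L0 R0 by simp
    finally show ?thesis unfolding D_def RHS_def by simp
  qed
qed

end

lemma lprod_Cons: "xs \<noteq> [] \<Longrightarrow> lprod (x # xs) = x * lprod xs"
  by (cases xs) auto

lemma lprod_expand:
  fixes f g :: "nat \<Rightarrow> 'a::ring"
  shows "distinct xs \<Longrightarrow> xs \<noteq> [] \<Longrightarrow>
    lprod (map (\<lambda>j. f j + g j) xs) = (\<Sum>V\<in>Pow (set xs). lprod (map (\<lambda>j. if j \<in> V then f j else g j) xs))"
proof (induction xs)
  case Nil then show ?case by simp
next
  case (Cons x xs)
  show ?case
  proof (cases "xs = []")
    case True
    have "Pow {x} = {{}, {x}}" by auto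
    then show ?thesis using True by (simp add: add.commute)
  next
    case False
    let ?h = "\<lambda>V j. if j \<in> V then f j else g j"
    have xn: "x \<notin> set xs" and dxs: "distinct xs" using Cons.prems by auto
    have IH: "lprod (map (\<lambda>j. f j + g j) xs) = (\<Sum>V\<in>Pow (set xs). lprod (map (?h V) xs))"
      using Cons.IH dxs False by simp
    have fin: "finite (Pow (set xs))" by simp
    have disj: "Pow (set xs) \<inter> insert x ` Pow (set xs) = {}" using xn by auto
    have inj: "inj_on (insert x) (Pow (set xs))"
    proof (rule inj_onI)
      fix A B assume AB: "A \<in> Pow (set xs)" "B \<in> Pow (set xs)" "insert x A = insert x B"
      then have "insert x A - {x} = insert x B - {x}" by simp
      then show "A = B" using xn AB(1,2) by auto
    qed
    have same: "map (?h (insert x V)) xs = map (?h V) xs" if "V \<in> Pow (set xs)" for V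
      using xn by (intro map_cong refl) auto
    have same2: "map (?h V) xs = map (?h V) xs" for V by simp
    have "lprod (map (\<lambda>j. f j + g j) (x # xs)) = (f x + g x) * lprod (map (\<lambda>j. f j + g j) xs)"
      using False by (simp add: lprod_Cons)
    also have "\<dots> = (\<Sum>V\<in>Pow (set xs). g x * lprod (map (?h V) xs)) + (\<Sum>V\<in>Pow (set xs). f x * lprod (map (?h V) xs))"
      unfolding IH distrib_right sum_distrib_left by (simp add: sum.distrib add.commute)
    also have "(\<Sum>V\<in>Pow (set xs). g x * lprod (map (?h V) xs)) = (\<Sum>V\<in>Pow (set xs). lprod (map (?h V) (x # xs)))"
    proof (intro sum.cong refl)
      fix V assume "V \<in> Pow (set xs)"
      then have "x \<notin> V" using xn by auto
      then show "g x * lprod (map (?h V) xs) = lprod (map (?h V) (x # xs))" using False by (simp add: lprod_Cons)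
    qed
    also have "(\<Sum>V\<in>Pow (set xs). f x * lprod (map (?h V) xs)) = (\<Sum>V\<in>insert x ` Pow (set xs). lprod (map (?h V) (x # xs)))"
    proof -
      have "(\<Sum>V\<in>insert x ` Pow (set xs). lprod (map (?h V) (x # xs))) = (\<Sum>V\<in>Pow (set xs). lprod (map (?h (insert x V)) (x # xs)))"
        using inj by (simp add: sum.reindex)
      also have "\<dots> = (\<Sum>V\<in>Pow (set xs). f x * lprod (map (?h V) xs))"
      proof (intro sum.cong refl)
        fix V assume V: "V \<in> Pow (set xs)"
        have ne: "map (?h (insert x V)) xs \<noteq> []" using False by simp
        have "lprod (map (?h (insert x V)) (x # xs)) = ?h (insert x V) x * lprod (map (?h (insert x V)) xs)"
          by (simp only: list.map(2) lprod_Cons[OF ne])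
        also have "\<dots> = ?h (insert x V) x * lprod (map (?h V) xs)" by (simp only: same[OF V])
        finally show "lprod (map (?h (insert x V)) (x # xs)) = f x * lprod (map (?h V) xs)" by simp
      qed
      finally show ?thesis by simp
    qed
    also have "(\<Sum>V\<in>Pow (set xs). lprod (map (?h V) (x # xs))) + (\<Sum>V\<in>insert x ` Pow (set xs). lprod (map (?h V) (x # xs)))
       = (\<Sum>V\<in>Pow (set xs) \<union> insert x ` Pow (set xs). lprod (map (?h V) (x # xs)))"
      using fin disj by (intro sum.union_disjoint[symmetric]) auto
    also have "Pow (set xs) \<union> insert x ` Pow (set xs) = Pow (set (x # xs))" by (simp add: Pow_insert)
    finally show ?thesis .
  qed
qed

theorem lemma3p8:
  fixes smul :: "complex \<Rightarrow> 'a::ring \<Rightarrow> 'a" and \<phi> :: "'a \<Rightarrow> complex"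
    and A1l A1r A2l A2r :: "'a set" and n :: nat and \<chi> :: "nat \<Rightarrow> side"
    and a1 a2 :: "nat \<Rightarrow> 'a"
  assumes "nc_space smul \<phi>"
    and "subalgebra smul A1l" and "subalgebra smul A1r"
    and "subalgebra smul A2l" and "subalgebra smul A2r"
    and "bimono_indep smul \<phi> A1l A1r A2l A2r"
    and "n \<ge> 1"
    and "\<forall>j\<in>{1..n}. a1 j \<in> (if \<chi> j = Lft then A1l else A1r)"
    and "\<forall>j\<in>{1..n}. a2 j \<in> (if \<chi> j = Lft then A2l else A2r)"
  shows "phiprod \<phi> (map (\<lambda>j. a1 j + a2 j) [1..<n + 1]) =
    (\<Sum>V\<in>Pow {1..n}. phiprod \<phi> (map a1 (sorted_list_of_set V)) *
       (\<Prod>W\<leftarrow>chi_gaps \<chi> n V. phiprod \<phi> (map a2 (sorted_list_of_set W))))"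
proof -
  let ?Alg = "alg4 A1l A1r A2l A2r"
  obtain \<Phi> \<Psi> where cb: "bimono_cbifree smul \<phi> ?Alg \<Phi> \<Psi>"
    and agree: "\<And>w. valid_word ?Alg w \<Longrightarrow> w \<noteq> [] \<Longrightarrow> \<phi> (lprod (map (snd \<circ> snd) w)) = \<Phi> w"
    using assms(6) unfolding bimono_indep_def by blast
  have Phi_nil: "\<Phi> [] = 1" and Psi_nil: "\<Psi> [] = 1"
    using cb unfolding bimono_cbifree_def word_functional_def by auto
  have P1: "\<And>w. valid_word ?Alg w \<Longrightarrow> w \<noteq> [] \<Longrightarrow> (\<forall>x\<in>set w. fst x = 1) \<Longrightarrow>
        \<Phi> w = \<phi> (lprod (map (snd \<circ> snd) w)) \<and> \<Psi> w = 0"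
    using cb unfolding bimono_cbifree_def by blast
  have P2: "\<And>w. valid_word ?Alg w \<Longrightarrow> w \<noteq> [] \<Longrightarrow> (\<forall>x\<in>set w. fst x = 2) \<Longrightarrow>
        \<Phi> w = \<phi> (lprod (map (snd \<circ> snd) w)) \<and> \<Psi> w = \<phi> (lprod (map (snd \<circ> snd) w))"
    using cb unfolding bimono_cbifree_def by blast
  have cbf: "\<And>m \<omega>' \<chi>' lam a'. m \<ge> 1 \<Longrightarrow> (\<forall>j\<in>{1..m}. \<omega>' j \<in> {1, 2} \<and> a' j \<in> ?Alg (\<omega>' j) (\<chi>' j)) \<Longrightarrow>
        (\<forall>X\<in>pi_blocks m \<chi>' \<omega>'. uext \<Psi> \<omega>' \<chi>' lam a' X = 0) \<Longrightarrow>
        uext \<Phi> \<omega>' \<chi>' lam a' {1..m} = (\<Prod>X\<in>pi_blocks m \<chi>' \<omega>'. uext \<Phi> \<omega>' \<chi>' lam a' X)"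
    using cb unfolding bimono_cbifree_def by blast
  have lin: "\<phi> (x + y) = \<phi> x + \<phi> y" for x y
    using assms(1) unfolding nc_space_def lin_functional_def by blast
  have phi0: "\<phi> 0 = 0" using lin[of 0 0] by simp
  have phisum: "\<phi> (sum f A) = (\<Sum>x\<in>A. \<phi> (f x))" for f :: "nat set \<Rightarrow> 'a" and A
  proof (induction A rule: infinite_finite_induct)
    case (infinite A) then show ?case using phi0 by simp
  next
    case empty then show ?case using phi0 by simp
  next
    case (insert x F) then show ?case using lin by simp
  qed
  have xs: "distinct [1..<n+1]" "[1..<n+1] \<noteq> []" "set [1..<n+1] = {1..n}" using assms(7) by auto
  have lhs: "phiprod \<phi> (map (\<lambda>j. a1 j + a2 j) [1..<n + 1]) =
      (\<Sum>V\<in>Pow {1..n}. \<phi> (lprod (map (\<lambda>j. if j \<in> V then a1 j else a2 j) [1..<n+1])))"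
    unfolding phiprod_def using xs lprod_expand[OF xs(1,2), of a1 a2] phisum by simp
  show ?thesis
    unfolding lhs
  proof (intro sum.cong refl)
    fix V assume V: "V \<in> Pow {1..n}"
    then have Vsub: "V \<subseteq> {1..n}" by simp
    define \<omega> where "\<omega> = (\<lambda>j::nat. if j \<in> V then (1::nat) else 2)"
    define a where "a = (\<lambda>j. if j \<in> V then a1 j else a2 j)"
    have ain: "\<forall>j\<in>{1..n}. a j \<in> ?Alg (\<omega> j) (\<chi> j)"
      using assms(8,9) unfolding a_def \<omega>_def alg4_def by auto
    interpret core \<Phi> \<Psi> ?Alg n \<chi> V \<omega> a
    proof
      show "\<Phi> [] = 1" "\<Psi> [] = 1" by (fact Phi_nil, fact Psi_nil)
      show "\<And>m \<omega>' \<chi>' lam a'. m \<ge> 1 \<Longrightarrow> (\<forall>j\<in>{1..m}. \<omega>' j \<in> {1, 2} \<and> a' j \<in> ?Alg (\<omega>' j) (\<chi>' j)) \<Longrightarrow>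
        (\<forall>X\<in>pi_blocks m \<chi>' \<omega>'. uext \<Psi> \<omega>' \<chi>' lam a' X = 0) \<Longrightarrow>
        uext \<Phi> \<omega>' \<chi>' lam a' {1..m} = (\<Prod>X\<in>pi_blocks m \<chi>' \<omega>'. uext \<Phi> \<omega>' \<chi>' lam a' X)"
        by (rule cbf)
      show "\<And>w. valid_word ?Alg w \<Longrightarrow> w \<noteq> [] \<Longrightarrow> (\<forall>x\<in>set w. fst x = 1) \<Longrightarrow> \<Psi> w = 0"
        using P1 by blast
      show "\<And>w. valid_word ?Alg w \<Longrightarrow> w \<noteq> [] \<Longrightarrow> (\<forall>x\<in>set w. fst x = 2) \<Longrightarrow> \<Phi> w = \<Psi> w"
        using P2 by simp
      show "V \<subseteq> {1..n}" by (fact Vsub)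
      show "\<omega> = (\<lambda>j. if j \<in> V then 1 else 2)" by (fact \<omega>_def)
      show "\<forall>j\<in>{1..n}. a j \<in> ?Alg (\<omega> j) (\<chi> j)" by (fact ain)
    qed
    have main: "uext \<Phi> \<omega> \<chi> (\<lambda>_. 0) a {1..n} = \<Phi> (wd V) * (\<Prod>t\<in>{0..card V}. uext \<Phi> \<omega> \<chi> (\<lambda>_. 0) a (Gs t \<inter> {1..n}))"
      using Vsub by (intro core_main) auto
    have sl: "sorted_list_of_set {1..n} = [1..<n+1]"
      by (metis atLeastLessThanSuc_atLeastAtMost sorted_list_of_set_range Suc_eq_plus1)
    have L: "\<phi> (lprod (map a [1..<n+1])) = uext \<Phi> \<omega> \<chi> (\<lambda>_. 0) a {1..n}"
    proof -
      have "uext \<Phi> \<omega> \<chi> (\<lambda>_. 0) a {1..n} = \<Phi> (wd {1..n})" by (rule uext_zero) auto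
      also have "\<dots> = \<phi> (lprod (map (snd \<circ> snd) (wd {1..n})))"
        using valid_wd[of "{1..n}"] xs by (intro agree[symmetric]) (auto simp: sl)
      also have "map (snd \<circ> snd) (wd {1..n}) = map a (sorted_list_of_set {1..n})" by (simp add: comp_def)
      also have "\<dots> = map a [1..<n+1]" by (simp only: sl)
      finally show ?thesis by simp
    qed
    have W1: "\<Phi> (wd V) = phiprod \<phi> (map a1 (sorted_list_of_set V))"
    proof (cases "V = {}")
      case True then show ?thesis using Phi_nil by (simp add: phiprod_def)
    next
      case False
      have fV: "finite V" using Vsub finite_subset by blast
      have "\<Phi> (wd V) = \<phi> (lprod (map (snd \<circ> snd) (wd V)))"
        using P1[of "wd V"] valid_wd[OF Vsub] False fV by (auto simp: \<omega>_def)
      also have "map (snd \<circ> snd) (wd V) = map a1 (sorted_list_of_set V)"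
        using fV by (simp add: a_def comp_def)
      finally show ?thesis using False fV by (simp add: phiprod_def)
    qed
    have W2: "uext \<Phi> \<omega> \<chi> (\<lambda>_. 0) a (Gs t \<inter> {1..n}) = phiprod \<phi> (map a2 (sorted_list_of_set (Gs t)))" for t
    proof -
      have GS: "Gs t \<inter> {1..n} = Gs t" using Gs_sub by blast
      have fG: "finite (Gs t)" using Gs_sub finite_subset by (metis finite_Diff finite_atLeastAtMost)
      have "uext \<Phi> \<omega> \<chi> (\<lambda>_. 0) a (Gs t \<inter> {1..n}) = \<Phi> (wd (Gs t))" unfolding GS using fG by (rule uext_zero) simp
      also have "\<dots> = phiprod \<phi> (map a2 (sorted_list_of_set (Gs t)))"
      proof (cases "Gs t = {}")
        case True then show ?thesis using Phi_nil by (simp add: phiprod_def)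
      next
        case False
        have sub: "Gs t \<subseteq> {1..n}" using Gs_sub by blast
        have "\<Phi> (wd (Gs t)) = \<phi> (lprod (map (snd \<circ> snd) (wd (Gs t))))"
        proof -
          have "\<forall>x\<in>set (wd (Gs t)). fst x = 2" using fG Gs_sub[of t] by (auto simp: \<omega>_def)
          then show ?thesis using P2[of "wd (Gs t)"] valid_wd[OF sub] False fG by simp
        qed
        also have "map (snd \<circ> snd) (wd (Gs t)) = map a2 (sorted_list_of_set (Gs t))"
          using fG Gs_sub by (auto simp: a_def comp_def)
        finally show ?thesis using False fG by (simp add: phiprod_def)
      qed
      finally show ?thesis .
    qed
    have fV: "finite V" using Vsub finite_subset by blast
    have gaps: "(\<Prod>W\<leftarrow>chi_gaps \<chi> n V. phiprod \<phi> (map a2 (sorted_list_of_set W)))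
        = (\<Prod>t\<in>{0..card V}. phiprod \<phi> (map a2 (sorted_list_of_set (Gs t))))"
    proof -
      have "(\<Prod>W\<leftarrow>chi_gaps \<chi> n V. phiprod \<phi> (map a2 (sorted_list_of_set W)))
          = (\<Prod>t\<leftarrow>[0..<card V + 1]. phiprod \<phi> (map a2 (sorted_list_of_set (Gs t))))"
        unfolding chi_gaps_G[OF fV] by (simp add: comp_def)
      also have "\<dots> = (\<Prod>t\<in>set [0..<card V + 1]. phiprod \<phi> (map a2 (sorted_list_of_set (Gs t))))"
        by (rule prod.distinct_set_conv_list[symmetric]) simp
      also have "set [0..<card V + 1] = {0..card V}" by auto
      finally show ?thesis .
    qed
    show "\<phi> (lprod (map (\<lambda>j. if j \<in> V then a1 j else a2 j) [1..<n+1])) =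
       phiprod \<phi> (map a1 (sorted_list_of_set V)) *
       (\<Prod>W\<leftarrow>chi_gaps \<chi> n V. phiprod \<phi> (map a2 (sorted_list_of_set W)))"
      unfolding gaps W1[symmetric] using L main W2 by (simp add: a_def)
  qed
qed

end
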